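(* Let $D,N$ be positive integers with $N\ge D$, let $\Omega\subseteq\{1,\dots,N\}^{\times 2}$, and let $G_\Omega:\mathbb{R}^{D\times N}\to\mathbb{R}^{|\Omega|}$, $Q\mapsto (Q^TQ)_\Omega$. Let $P\in\mathbb{R}^{D\times N}$ be generic, $\vec{\mathcal{K}}:=G_\Omega(P)$, and let $U$ be an open set of full Lebesgue measure containing $P$ such that $U\cap G_\Omega^{-1}(\vec{\mathcal{K}})$ is a smooth submanifold of $\mathbb{R}^{D\times N}$ of dimension $DN-\mathrm{rank}(d(G_\Omega)_P)$. Let $\tilde N_P:=\{OP: O\in O(D)\}$, where $O(D)$ is the group of orthogonal $D\times D$ matrices. Then, with probability $1$, $$\dim(\tilde N_P)=\dim\bigl(U\cap G_\Omega^{-1}(\vec{\mathcal{K}})\bigr)\iff \exists\,\tilde U\subseteq U\text{ open neighborhood of }P:\ \tilde U\cap\tilde N_P=\tilde U\cap G_\Omega^{-1}(\vec{\mathcal{K}}).$$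
   Context: A random matrix $P\in\mathbb{R}^{D\times N}$ is called generic if it is drawn from a probability measure on $\mathbb{R}^{D\times N}$ absolutely continuous with respect to Lebesgue measure. $d(G_\Omega)_P$ denotes the Jacobian of $G_\Omega$ at $P$. (For $P$ of rank $D$, $\tilde N_P$ is a smooth submanifold of $\mathbb{R}^{D\times N}$ of dimension $D(D-1)/2$.) *)

theory Defs
  imports "HOL-Analysis.Analysis"
begin

text \<open>C^k maps between finite-dimensional real normed spaces, via iterated directional
  derivatives (equivalent to the usual notion in finite dimensions).\<close>
fun C_k_on :: "nat \<Rightarrow> 'a::euclidean_space set \<Rightarrow> ('a \<Rightarrow> 'b::euclidean_space) \<Rightarrow> bool" where
  "C_k_on 0 S f = continuous_on S f"
| "C_k_on (Suc k) S f =
     ((\<forall>x\<in>S. f differentiable (at x)) \<and>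
      (\<forall>v. C_k_on k S (\<lambda>x. frechet_derivative f (at x) v)))"

definition smooth_on :: "'a::euclidean_space set \<Rightarrow> ('a \<Rightarrow> 'b::euclidean_space) \<Rightarrow> bool" where
  "smooth_on S f \<longleftrightarrow> (\<forall>k. C_k_on k S f)"

definition diffeomorphism_between ::
  "'a::euclidean_space set \<Rightarrow> 'a set \<Rightarrow> ('a \<Rightarrow> 'a) \<Rightarrow> ('a \<Rightarrow> 'a) \<Rightarrow> bool" where
  "diffeomorphism_between V W \<phi> \<psi> \<longleftrightarrow>
     open V \<and> open W \<and> smooth_on V \<phi> \<and> smooth_on W \<psi> \<and> \<phi> ` V = W \<and> \<psi> ` W = V \<and>
     (\<forall>x\<in>V. \<psi> (\<phi> x) = x) \<and> (\<forall>y\<in>W. \<phi> (\<psi> y) = y)"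

definition smooth_submanifold :: "nat \<Rightarrow> 'a::euclidean_space set \<Rightarrow> bool" where
  "smooth_submanifold k M \<longleftrightarrow>
     (\<forall>p\<in>M. \<exists>V W \<phi> \<psi> L. p \<in> V \<and> diffeomorphism_between V W \<phi> \<psi> \<and>
        subspace L \<and> dim L = k \<and> \<phi> ` (M \<inter> V) = W \<inter> L)"

text \<open>G_Omega(Q) = (Q^T Q) restricted to Omega; entries outside Omega are set to 0,
  so the codomain is (isomorphic to) R^|Omega|.\<close>
definition G_Omega :: "('n::finite \<times> 'n) set \<Rightarrow> real^'n^'d \<Rightarrow> real^('n \<times> 'n)" where
  "G_Omega \<Omega> Q = (\<chi> ij. if ij \<in> \<Omega> then (transpose Q ** Q) $ fst ij $ snd ij else 0)"

definition orbit_OD :: "real^'n^'d \<Rightarrow> (real^'n^'d) set" where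
  "orbit_OD P = {R ** P | R :: real^'d^'d. orthogonal_matrix R}"

end

theory Submission imports Defs "HOL-Homology.Invariance_of_Domain" begin

lemma Ck_mono: "T \<subseteq> S \<Longrightarrow> C_k_on k S f \<Longrightarrow> C_k_on k T f"
  by (induction k arbitrary: f) (auto intro: continuous_on_subset)

lemma Ck_cong:
  assumes "open S" "\<And>x. x \<in> S \<Longrightarrow> f x = g x" "C_k_on k S f"
  shows "C_k_on k S g"
  using assms(2,3)
proof (induction k arbitrary: f g)
  case 0 then show ?case using continuous_on_cong by force
next
  case (Suc k)
  have d: "(g has_derivative frechet_derivative f (at x)) (at x)" if "x \<in> S" for x
    using Suc.prems that has_derivative_transform_within_open[OF _ assms(1) that, of f _ UNIV g]
    by (auto simp: frechet_derivative_works)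
  show ?case
  proof (simp, intro conjI ballI allI)
    fix x assume "x \<in> S" then show "g differentiable at x" using d differentiable_def by blast
  next
    fix v
    have "C_k_on k S (\<lambda>x. frechet_derivative f (at x) v)" using Suc.prems by simp
    then show "C_k_on k S (\<lambda>x. frechet_derivative g (at x) v)"
      by (rule Suc.IH[rotated]) (metis d frechet_derivative_at)
  qed
qed

lemma Ck_left:
  fixes h :: "'b::euclidean_space \<Rightarrow> 'c::euclidean_space"
  assumes "open S" "linear h" "C_k_on k S f"
  shows "C_k_on k S (\<lambda>x. h (f x))"
  using assms(3)
proof (induction k arbitrary: f)
  case 0 then show ?case using linear_continuous_on_compose assms(2) by simp
next
  case (Suc k)
  have bl: "bounded_linear h" using assms(2) linear_conv_bounded_linear by blast
  have d: "((\<lambda>x. h (f x)) has_derivative (\<lambda>v. h (frechet_derivative f (at x) v))) (at x)" if "x \<in> S" for x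
    using Suc.prems that bounded_linear.has_derivative[OF bl] by (auto simp: frechet_derivative_works)
  show ?case
  proof (simp, intro conjI ballI allI)
    fix x assume "x \<in> S" then show "(\<lambda>x. h (f x)) differentiable at x" using d differentiable_def by blast
  next
    fix v
    have "C_k_on k S (\<lambda>x. h (frechet_derivative f (at x) v))" using Suc.prems Suc.IH by simp
    then show "C_k_on k S (\<lambda>x. frechet_derivative (\<lambda>x. h (f x)) (at x) v)"
      by (rule Ck_cong[OF assms(1), rotated]) (metis d frechet_derivative_at)
  qed
qed

lemma Ck_right:
  fixes g :: "'a::euclidean_space \<Rightarrow> 'b::euclidean_space" and f :: "'b \<Rightarrow> 'c::euclidean_space"
  assumes "open S" "linear g" "C_k_on k S f"
  shows "C_k_on k (g -` S) (\<lambda>x. f (g x))"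
  using assms(3)
proof (induction k arbitrary: f)
  have bl: "bounded_linear g" using assms(2) linear_conv_bounded_linear by blast
  case 0 then show ?case
    using continuous_on_compose[of "g -` S" g f] linear_continuous_on[OF bl]
    by (auto simp: o_def intro: continuous_on_subset)
next
  case (Suc k)
  have bl: "bounded_linear g" using assms(2) linear_conv_bounded_linear by blast
  have op: "open (g -` S)" using open_vimage[OF assms(1) linear_continuous_on[OF bl]] .
  have d: "((\<lambda>x. f (g x)) has_derivative (\<lambda>v. frechet_derivative f (at (g x)) (g v))) (at x)" if "x \<in> g -` S" for x
  proof -
    have "(f has_derivative frechet_derivative f (at (g x))) (at (g x))"
      using Suc.prems that by (auto simp: frechet_derivative_works)
    then show ?thesis
      using diff_chain_at[OF bounded_linear_imp_has_derivative[OF bl]] by (simp add: o_def)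
  qed
  show ?case
  proof (simp only: C_k_on.simps, intro conjI ballI allI)
    fix x assume "x \<in> g -` S" then show "(\<lambda>x. f (g x)) differentiable at x" using d differentiable_def by blast
  next
    fix v
    have "C_k_on k S (\<lambda>y. frechet_derivative f (at y) (g v))" using Suc.prems by simp
    then have "C_k_on k (g -` S) (\<lambda>x. frechet_derivative f (at (g x)) (g v))" using Suc.IH by blast
    then show "C_k_on k (g -` S) (\<lambda>x. frechet_derivative (\<lambda>x. f (g x)) (at x) v)"
      by (rule Ck_cong[OF op, rotated]) (metis d frechet_derivative_at)
  qed
qed


lemma smooth_cont: "smooth_on S f \<Longrightarrow> continuous_on S f"
  unfolding smooth_on_def by (metis C_k_on.simps(1))

lemma diffeo_restrict:
  assumes D: "diffeomorphism_between V W \<phi> \<psi>" and O: "open B"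
  shows "diffeomorphism_between (V \<inter> B) (W \<inter> \<psi> -` (V \<inter> B)) \<phi> \<psi>"
proof -
  have oV: "open V" "open W" and sV: "smooth_on V \<phi>" and sW: "smooth_on W \<psi>"
    and im: "\<phi> ` V = W" "\<psi> ` W = V" and inv: "\<forall>x\<in>V. \<psi> (\<phi> x) = x" "\<forall>y\<in>W. \<phi> (\<psi> y) = y"
    using D unfolding diffeomorphism_between_def by auto
  have oW: "open (W \<inter> \<psi> -` (V \<inter> B))"
  proof -
    have "\<forall>C. open C \<longrightarrow> open (\<psi> -` C \<inter> W)"
      using continuous_on_open_vimage[of W \<psi>] oV smooth_cont[OF sW] by blast
    moreover have "open (V \<inter> B)" using oV O by blast
    ultimately have "open (\<psi> -` (V \<inter> B) \<inter> W)" by blast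
    then show ?thesis by (simp add: Int_commute)
  qed
  have s1: "smooth_on (V \<inter> B) \<phi>" using sV unfolding smooth_on_def by (meson Ck_mono Int_lower1)
  have s2: "smooth_on (W \<inter> \<psi> -` (V \<inter> B)) \<psi>" using sW unfolding smooth_on_def by (meson Ck_mono Int_lower1)
  have i1: "\<phi> ` (V \<inter> B) = W \<inter> \<psi> -` (V \<inter> B)"
  proof
    show "\<phi> ` (V \<inter> B) \<subseteq> W \<inter> \<psi> -` (V \<inter> B)" using im inv by auto
    show "W \<inter> \<psi> -` (V \<inter> B) \<subseteq> \<phi> ` (V \<inter> B)"
    proof
      fix y assume "y \<in> W \<inter> \<psi> -` (V \<inter> B)"
      then show "y \<in> \<phi> ` (V \<inter> B)" using inv(2) image_eqI[of y \<phi> "\<psi> y" "V \<inter> B"] by auto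
    qed
  qed
  have i2: "\<psi> ` (W \<inter> \<psi> -` (V \<inter> B)) = V \<inter> B"
  proof
    show "\<psi> ` (W \<inter> \<psi> -` (V \<inter> B)) \<subseteq> V \<inter> B" by auto
    show "V \<inter> B \<subseteq> \<psi> ` (W \<inter> \<psi> -` (V \<inter> B))"
    proof
      fix x assume x: "x \<in> V \<inter> B"
      then have "\<phi> x \<in> W \<inter> \<psi> -` (V \<inter> B)" using im inv by auto
      then show "x \<in> \<psi> ` (W \<inter> \<psi> -` (V \<inter> B))" using inv(1) x image_eqI[of x \<psi> "\<phi> x"] by auto
    qed
  qed
  show ?thesis unfolding diffeomorphism_between_def
    using oV O oW s1 s2 i1 i2 inv by auto
qed

lemma diffeo_lin:
  assumes D: "diffeomorphism_between V W \<phi> \<psi>" and "linear h" "linear h'"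
    and hh: "\<And>x. h (h' x) = x" "\<And>x. h' (h x) = x"
  shows "diffeomorphism_between (h' -` V) W (\<lambda>x. \<phi> (h' x)) (\<lambda>y. h (\<psi> y))"
proof -
  have oV: "open V" "open W" and sV: "smooth_on V \<phi>" and sW: "smooth_on W \<psi>"
    and im: "\<phi> ` V = W" "\<psi> ` W = V" and inv: "\<forall>x\<in>V. \<psi> (\<phi> x) = x" "\<forall>y\<in>W. \<phi> (\<psi> y) = y"
    using D unfolding diffeomorphism_between_def by auto
  have bl: "bounded_linear h'" using assms(3) linear_conv_bounded_linear by blast
  have op: "open (h' -` V)" using oV open_vimage[OF _ linear_continuous_on[OF bl]] by blast
  have s1: "smooth_on (h' -` V) (\<lambda>x. \<phi> (h' x))"
    using sV oV Ck_right[OF _ assms(3)] unfolding smooth_on_def by blast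
  have s2: "smooth_on W (\<lambda>y. h (\<psi> y))"
    using sW oV Ck_left[OF _ assms(2)] unfolding smooth_on_def by blast
  have hv: "h' ` (h' -` V) = V"
  proof
    show "h' ` (h' -` V) \<subseteq> V" by auto
    show "V \<subseteq> h' ` (h' -` V)"
    proof
      fix x assume "x \<in> V"
      then have "h x \<in> h' -` V" using hh(2)[of x] by simp
      then show "x \<in> h' ` (h' -` V)" using hh(2)[of x] image_eqI[of x h' "h x" "h' -` V"] by simp
    qed
  qed
  have i1: "(\<lambda>x. \<phi> (h' x)) ` (h' -` V) = W"
  proof -
    have "(\<lambda>x. \<phi> (h' x)) ` (h' -` V) = \<phi> ` (h' ` (h' -` V))" by (simp only: image_image)
    then show ?thesis using hv im by simp
  qed
  have i2: "(\<lambda>y. h (\<psi> y)) ` W = h' -` V"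
  proof
    show "(\<lambda>y. h (\<psi> y)) ` W \<subseteq> h' -` V" using im hh by auto
    show "h' -` V \<subseteq> (\<lambda>y. h (\<psi> y)) ` W"
    proof
      fix x assume x: "x \<in> h' -` V"
      then have "\<phi> (h' x) \<in> W" using im by auto
      moreover have "h (\<psi> (\<phi> (h' x))) = x" using inv x hh by auto
      ultimately show "x \<in> (\<lambda>y. h (\<psi> y)) ` W" using image_eqI[of x "\<lambda>y. h (\<psi> y)" "\<phi> (h' x)" W] by simp
    qed
  qed
  have i3: "\<forall>x\<in>h' -` V. h (\<psi> (\<phi> (h' x))) = x" using inv hh by auto
  have i4: "\<forall>y\<in>W. \<phi> (h' (h (\<psi> y))) = y" using inv hh by auto
  show ?thesis unfolding diffeomorphism_between_def
    using oV op s1 s2 i1 i2 i3 i4 by blast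
qed


lemma dir1:
  fixes M X U :: "'a::euclidean_space set"
  assumes SM: "smooth_submanifold k M" and SF: "smooth_submanifold k (U \<inter> X)"
    and MX: "M \<subseteq> X" and PM: "P \<in> M" and PU: "P \<in> U" and oU: "open U"
  shows "\<exists>U'. open U' \<and> P \<in> U' \<and> U' \<subseteq> U \<and> U' \<inter> M = U' \<inter> (U \<inter> X)"
proof -
  define F where "F = U \<inter> X"
  have PF: "P \<in> F" using PM PU MX F_def by auto
  obtain V W \<phi> \<psi> L where PV: "P \<in> V" and D: "diffeomorphism_between V W \<phi> \<psi>"
    and L: "subspace L" "dim L = k" and FV: "\<phi> ` (F \<inter> V) = W \<inter> L"
    using SF PF unfolding smooth_submanifold_def F_def by blast
  obtain V2 W2 \<phi>2 \<psi>2 L2 where PV2: "P \<in> V2" and D2: "diffeomorphism_between V2 W2 \<phi>2 \<psi>2"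
    and L2: "subspace L2" "dim L2 = k" and MV: "\<phi>2 ` (M \<inter> V2) = W2 \<inter> L2"
    using SM PM unfolding smooth_submanifold_def by blast
  have oV: "open V" "open W" and cV: "continuous_on V \<phi>" and cW: "continuous_on W \<psi>"
    and im: "\<phi> ` V = W" "\<psi> ` W = V" and inv: "\<forall>x\<in>V. \<psi> (\<phi> x) = x" "\<forall>y\<in>W. \<phi> (\<psi> y) = y"
    using D smooth_cont unfolding diffeomorphism_between_def by auto
  have oV2: "open V2" "open W2" and cV2: "continuous_on V2 \<phi>2" and cW2: "continuous_on W2 \<psi>2"
    and im2: "\<phi>2 ` V2 = W2" "\<psi>2 ` W2 = V2" and inv2: "\<forall>x\<in>V2. \<psi>2 (\<phi>2 x) = x" "\<forall>y\<in>W2. \<phi>2 (\<psi>2 y) = y"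
    using D2 smooth_cont unfolding diffeomorphism_between_def by auto
  define A where "A = L2 \<inter> (\<psi>2 -` (V \<inter> U) \<inter> W2)"
  have oA0: "open (\<psi>2 -` (V \<inter> U) \<inter> W2)"
    using continuous_on_open_vimage[of W2 \<psi>2] oV2 cW2 oV oU by blast
  have oA: "openin (top_of_set L2) A" unfolding A_def using oA0 openin_open by blast
  have AM: "\<psi>2 y \<in> M \<and> \<psi>2 y \<in> V \<and> \<psi>2 y \<in> U" if "y \<in> A" for y
  proof -
    have "y \<in> \<phi>2 ` (M \<inter> V2)" using that MV A_def by auto
    then obtain m where "m \<in> M \<inter> V2" "y = \<phi>2 m" by blast
    then show ?thesis using inv2 that A_def by auto
  qed
  have cA: "continuous_on A (\<lambda>y. \<phi> (\<psi>2 y))"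
  proof -
    have "continuous_on A \<psi>2" using cW2 by (rule continuous_on_subset) (auto simp: A_def)
    moreover have "\<psi>2 ` A \<subseteq> V" using AM by auto
    ultimately show ?thesis using continuous_on_compose2[OF cV] by blast
  qed
  have fA: "(\<lambda>y. \<phi> (\<psi>2 y)) \<in> A \<rightarrow> L"
  proof
    fix y assume "y \<in> A"
    then have "\<psi>2 y \<in> F \<inter> V" using AM MX F_def by auto
    then show "\<phi> (\<psi>2 y) \<in> L" using FV by blast
  qed
  have injA: "inj_on (\<lambda>y. \<phi> (\<psi>2 y)) A"
  proof
    fix x y assume xy: "x \<in> A" "y \<in> A" "\<phi> (\<psi>2 x) = \<phi> (\<psi>2 y)"
    then have "\<psi>2 x = \<psi>2 y" using AM inv by metis
    then show "x = y" using xy inv2 A_def by (metis IntD2)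
  qed
  have "openin (top_of_set L) ((\<lambda>y. \<phi> (\<psi>2 y)) ` A)"
    by (rule invariance_of_domain_subspaces[OF oA L2(1) L(1) _ cA fA injA]) (simp add: L L2)
  then obtain Op where oOp: "open Op" and fAO: "(\<lambda>y. \<phi> (\<psi>2 y)) ` A = L \<inter> Op"
    unfolding openin_open by blast
  define U' where "U' = (\<phi> -` Op \<inter> V) \<inter> U \<inter> V2"
  have oU': "open U'" unfolding U'_def
    using continuous_on_open_vimage[of V \<phi>] oV cV oOp oU oV2 by blast
  have "\<phi>2 P \<in> A" using PM PV2 PV PU inv2 im2 MV A_def by auto
  then have "\<phi> P \<in> Op" using fAO inv2 PV2 by (metis IntD2 image_eqI)
  then have PU': "P \<in> U'" using PV PU PV2 U'_def by auto
  have "U' \<inter> M = U' \<inter> F"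
  proof
    show "U' \<inter> M \<subseteq> U' \<inter> F" using MX U'_def F_def by auto
    show "U' \<inter> F \<subseteq> U' \<inter> M"
    proof
      fix x assume x: "x \<in> U' \<inter> F"
      then have "\<phi> x \<in> W \<inter> L" using FV U'_def by auto
      moreover have "\<phi> x \<in> Op" using x U'_def by auto
      ultimately have "\<phi> x \<in> (\<lambda>y. \<phi> (\<psi>2 y)) ` A" using fAO by auto
      then obtain y where y: "y \<in> A" "\<phi> x = \<phi> (\<psi>2 y)" by blast
      have xV: "x \<in> V" using x U'_def by auto
      have yV: "\<psi>2 y \<in> V" using AM y by auto
      have "x = \<psi> (\<phi> x)" using inv xV by simp
      also have "\<dots> = \<psi> (\<phi> (\<psi>2 y))" using y by simp
      also have "\<dots> = \<psi>2 y" using inv yV by simp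
      finally have "x = \<psi>2 y" .
      then show "x \<in> U' \<inter> M" using AM y x by auto
    qed
  qed
  then show ?thesis using oU' PU' U'_def F_def by blast
qed


lemma dir2:
  fixes M F U' :: "'a::euclidean_space set"
  assumes SF: "smooth_submanifold k F" and oU': "open U'" and PU': "P \<in> U'" and PF: "P \<in> F"
   and eq: "U' \<inter> M = U' \<inter> F"
   and hom: "\<And>q. q \<in> M \<Longrightarrow> \<exists>h h'. linear h \<and> linear h' \<and> (\<forall>x. h (h' x) = x) \<and> (\<forall>x. h' (h x) = x)
                \<and> h P = q \<and> h ` M \<subseteq> M \<and> h' ` M \<subseteq> M"
  shows "smooth_submanifold k M"
  unfolding smooth_submanifold_def
proof
  fix q assume qM: "q \<in> M"
  obtain h h' where hl: "linear h" "linear h'" and hh: "\<forall>x. h (h' x) = x" "\<forall>x. h' (h x) = x"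
    and hP: "h P = q" and hM: "h ` M \<subseteq> M" "h' ` M \<subseteq> M" using hom[OF qM] by blast
  obtain V W \<phi> \<psi> L where PV: "P \<in> V" and D: "diffeomorphism_between V W \<phi> \<psi>"
    and L: "subspace L" "dim L = k" and FV: "\<phi> ` (F \<inter> V) = W \<inter> L"
    using SF PF unfolding smooth_submanifold_def by blast
  have inv: "\<forall>x\<in>V. \<psi> (\<phi> x) = x" and im: "\<phi> ` V = W"
    using D unfolding diffeomorphism_between_def by auto
  define V1 where "V1 = V \<inter> U'"
  define W1 where "W1 = W \<inter> \<psi> -` V1"
  have D1: "diffeomorphism_between V1 W1 \<phi> \<psi>"
    unfolding V1_def W1_def by (rule diffeo_restrict[OF D oU'])
  have MV1: "\<phi> ` (M \<inter> V1) = W1 \<inter> L"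
  proof
    have "M \<inter> V1 = F \<inter> V1" using eq V1_def by auto
    show "\<phi> ` (M \<inter> V1) \<subseteq> W1 \<inter> L"
    proof
      fix y assume "y \<in> \<phi> ` (M \<inter> V1)"
      then obtain x where x: "x \<in> F \<inter> V1" "y = \<phi> x" using \<open>M \<inter> V1 = F \<inter> V1\<close> by auto
      then have "y \<in> W \<inter> L" using FV V1_def by auto
      moreover have "\<psi> y = x" using x inv V1_def by auto
      ultimately show "y \<in> W1 \<inter> L" using x W1_def by auto
    qed
    show "W1 \<inter> L \<subseteq> \<phi> ` (M \<inter> V1)"
    proof
      fix y assume y: "y \<in> W1 \<inter> L"
      then have "y \<in> \<phi> ` (F \<inter> V)" using FV W1_def by auto
      then obtain x where x: "x \<in> F \<inter> V" "y = \<phi> x" by auto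
      then have "\<psi> y = x" using inv by auto
      then have "x \<in> V1" using y W1_def by auto
      then have "x \<in> M \<inter> V1" using x \<open>M \<inter> V1 = F \<inter> V1\<close> by auto
      then show "y \<in> \<phi> ` (M \<inter> V1)" using x by auto
    qed
  qed
  have D2: "diffeomorphism_between (h' -` V1) W1 (\<lambda>x. \<phi> (h' x)) (\<lambda>y. h (\<psi> y))"
    using diffeo_lin[OF D1 hl] hh by blast
  have qV: "q \<in> h' -` V1" using hP hh PV PU' V1_def by auto
  have "h' ` (M \<inter> h' -` V1) = M \<inter> V1"
  proof
    show "h' ` (M \<inter> h' -` V1) \<subseteq> M \<inter> V1" using hM by auto
    show "M \<inter> V1 \<subseteq> h' ` (M \<inter> h' -` V1)"
    proof
      fix x assume x: "x \<in> M \<inter> V1"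
      then have "h x \<in> M \<inter> h' -` V1" using hM hh by auto
      then show "x \<in> h' ` (M \<inter> h' -` V1)" using hh image_eqI[of x h' "h x"] by auto
    qed
  qed
  then have "(\<lambda>x. \<phi> (h' x)) ` (M \<inter> h' -` V1) = W1 \<inter> L"
    using MV1 by (simp only: image_image[symmetric, of \<phi> h'])
  then show "\<exists>V W \<phi> \<psi> L. q \<in> V \<and> diffeomorphism_between V W \<phi> \<psi> \<and> subspace L \<and> dim L = k \<and> \<phi> ` (M \<inter> V) = W \<inter> L"
    using qV D2 L by blast
qed


lemma lin_mm: "linear (\<lambda>Q::real^'n^'d. (R::real^'d^'e) ** Q)"
  by (rule linearI) (simp_all add: matrix_add_ldistrib vec_eq_iff matrix_matrix_mult_def
      sum_distrib_left sum.distrib algebra_simps)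

lemma G_inv:
  assumes "orthogonal_matrix (R::real^'d^'d)"
  shows "G_Omega \<Omega> (R ** Q) = G_Omega \<Omega> (Q::real^'n^'d)"
proof -
  have eq: "transpose (R ** Q) ** (R ** Q) = transpose Q ** Q"
    using assms by (simp add: matrix_transpose_mul matrix_mul_assoc orthogonal_matrix)
      (metis matrix_mul_assoc matrix_mul_lid orthogonal_matrix assms)
  show ?thesis unfolding G_Omega_def by (simp only: eq)
qed

theorem corollary1:
  fixes \<Omega> :: "('n::finite \<times> 'n) set"
  assumes "CARD('n) \<ge> CARD('d::finite)"
  shows "AE P in lborel.
    \<forall>U :: (real^'n^'d) set.
      (open U \<and> P \<in> U \<and> (- U) \<in> null_sets lborel \<and>
       smooth_submanifold (CARD('d) * CARD('n) - dim (range (frechet_derivative (G_Omega \<Omega>) (at P))))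
         (U \<inter> G_Omega \<Omega> -` {G_Omega \<Omega> P}))
      \<longrightarrow>
      ((\<exists>k. smooth_submanifold k (orbit_OD P) \<and> smooth_submanifold k (U \<inter> G_Omega \<Omega> -` {G_Omega \<Omega> P}))
       \<longleftrightarrow>
       (\<exists>U'. open U' \<and> P \<in> U' \<and> U' \<subseteq> U \<and>
          U' \<inter> orbit_OD P = U' \<inter> G_Omega \<Omega> -` {G_Omega \<Omega> P}))"
proof (rule AE_I2, intro allI impI)
  fix P :: "real^'n^'d" and U :: "(real^'n^'d) set"
  define K where "K = CARD('d) * CARD('n) - dim (range (frechet_derivative (G_Omega \<Omega>) (at P)))"
  define X :: "(real^'n^'d) set" where "X = G_Omega \<Omega> -` {G_Omega \<Omega> P}"
  define M :: "(real^'n^'d) set" where "M = orbit_OD P"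
  assume "open U \<and> P \<in> U \<and> (- U) \<in> null_sets lborel \<and>
       smooth_submanifold (CARD('d) * CARD('n) - dim (range (frechet_derivative (G_Omega \<Omega>) (at P))))
         (U \<inter> G_Omega \<Omega> -` {G_Omega \<Omega> P})"
  then have oU: "open U" and PU: "P \<in> U" and SF: "smooth_submanifold K (U \<inter> X)"
    unfolding K_def X_def by auto
  have MX: "M \<subseteq> X" unfolding M_def X_def orbit_OD_def using G_inv by auto
  have PM: "P \<in> M" unfolding M_def orbit_OD_def
  proof (rule CollectI, rule exI[of _ "mat 1"])
    show "P = mat 1 ** P \<and> orthogonal_matrix (mat 1 :: real^'d^'d)"
      using orthogonal_matrix_id by simp
  qed
  have hom: "\<exists>h h'. linear h \<and> linear h' \<and> (\<forall>x. h (h' x) = x) \<and> (\<forall>x. h' (h x) = x)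
                \<and> h P = q \<and> h ` M \<subseteq> M \<and> h' ` M \<subseteq> M" if qM: "q \<in> M" for q
  proof -
    obtain R :: "real^'d^'d" where R: "orthogonal_matrix R" "q = R ** P"
      using qM unfolding M_def orbit_OD_def by blast
    have RT: "orthogonal_matrix (transpose R)" using R by simp
    have o1: "R ** transpose R = mat 1" "transpose R ** R = mat 1"
      using R unfolding orthogonal_matrix_def by auto
    have c1: "\<forall>x::real^'n^'d. R ** (transpose R ** x) = x"
      using o1 by (simp add: matrix_mul_assoc)
    have c2: "\<forall>x::real^'n^'d. transpose R ** (R ** x) = x"
      using o1 by (simp add: matrix_mul_assoc)
    have m1: "(\<lambda>Q. R ** Q) ` M \<subseteq> M"
      unfolding M_def orbit_OD_def using R orthogonal_matrix_mul matrix_mul_assoc by blast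
    have m2: "(\<lambda>Q. transpose R ** Q) ` M \<subseteq> M"
      unfolding M_def orbit_OD_def using RT orthogonal_matrix_mul matrix_mul_assoc by blast
    show ?thesis using lin_mm[of R] lin_mm[of "transpose R"] c1 c2 m1 m2 R(2) by blast
  qed
  show "(\<exists>k. smooth_submanifold k (orbit_OD P) \<and> smooth_submanifold k (U \<inter> G_Omega \<Omega> -` {G_Omega \<Omega> P}))
       \<longleftrightarrow>
       (\<exists>U'. open U' \<and> P \<in> U' \<and> U' \<subseteq> U \<and>
          U' \<inter> orbit_OD P = U' \<inter> G_Omega \<Omega> -` {G_Omega \<Omega> P})"
    unfolding M_def[symmetric] X_def[symmetric]
  proof
    assume "\<exists>k. smooth_submanifold k M \<and> smooth_submanifold k (U \<inter> X)"
    then obtain k where "smooth_submanifold k M" "smooth_submanifold k (U \<inter> X)" by blast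
    from dir1[OF this MX PM PU oU] obtain U' where
      "open U'" "P \<in> U'" "U' \<subseteq> U" "U' \<inter> M = U' \<inter> (U \<inter> X)" by blast
    then show "\<exists>U'. open U' \<and> P \<in> U' \<and> U' \<subseteq> U \<and> U' \<inter> M = U' \<inter> X" by blast
  next
    assume "\<exists>U'. open U' \<and> P \<in> U' \<and> U' \<subseteq> U \<and> U' \<inter> M = U' \<inter> X"
    then obtain U' where U': "open U'" "P \<in> U'" "U' \<subseteq> U" "U' \<inter> M = U' \<inter> X" by blast
    have eq: "U' \<inter> M = U' \<inter> (U \<inter> X)" using U' by blast
    have PF: "P \<in> U \<inter> X" using PU PM MX by blast
    have "smooth_submanifold K M" by (rule dir2[OF SF U'(1,2) PF eq hom])
    then show "\<exists>k. smooth_submanifold k M \<and> smooth_submanifold k (U \<inter> X)" using SF by blast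
  qed
qed

end
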